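(* The bracket on $\mathbb{R}^2$ determined by \[ \{\Omega_1,\Omega_2\} := -\frac{I_{13}\Omega_1 + I_{23}\Omega_2 + B_3}{I_{11} I_{22}} \] coincides with the reduced nonholonomic bracket $\{\cdot,\cdot\}_{\widehat{\mathcal{D}^*}}$ on $\widehat{\mathcal{D}^*}=\mathcal{D}^*/SO(3)\cong\mathbb{R}^2$, expressed in the coordinates $(\Omega_1,\Omega_2)$.
   Context: Suslov problem with a gyrostat: configuration space $Q=SO(3)$, with $\Omega=(\Omega_1,\Omega_2,\Omega_3)$ the body angular velocity. The Lagrangian is $L=\frac12(\mathbb{I}\Omega)\cdot\Omega + B\cdot\Omega$, where $B=(B_1,B_2,B_3)\in\mathbb{R}^3$ is the constant angular momentum of the gyrostat and the inertia tensor is \[ \mathbb{I}=\begin{pmatrix} I_{11} & 0 & I_{13}\\ 0 & I_{22} & I_{23}\\ I_{13} & I_{23} & I_{33}\end{pmatrix}. \] The kinetic term defines a Riemannian metric $g$ on $Q$ and the linear term defines a gyroscopic 1-form $\eta$. The nonholonomic constraint $\Omega_3=0$ defines a left-invariant, non-integrable rank-2 distribution $\mathcal{D}\subset TQ$. Using $g$, $\mathcal{D}^*$ is identified with the annihilator of $\mathcal{D}^\perp$ in $T^*Q$, $\eta=\eta^\parallel+\eta^\perp$ is decomposed accordingly, $i_\mathcal{D}^*:T^*Q\to\mathcal{D}^*$ is the projection, $\mathcal{P}^*:\mathcal{D}^*\hookrightarrow T^*Q$ the inclusion, and $\tau_{\mathcal{D}^*}:\mathcal{D}^*\to Q$ the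 bundle projection. The nonholonomic bracket on $\mathcal{D}^*$ is $\{\varphi,\psi\}_{\mathcal{D}^*}:=\{\varphi\circ i_\mathcal{D}^*,\psi\circ i_\mathcal{D}^*\}\circ(\mathcal{P}^*+\eta^\perp\circ\tau_{\mathcal{D}^*})$, with $\{\cdot,\cdot\}$ the canonical Poisson bracket on $T^*Q$. $SO(3)$ acts on $Q$ by left multiplication, preserving $L$ and $\mathcal{D}$; the bracket is invariant and descends to a reduced bracket $\{\cdot,\cdot\}_{\widehat{\mathcal{D}^*}}$ on $\widehat{\mathcal{D}^*}=\mathcal{D}^*/SO(3)\cong\mathbb{R}^2$. If $p_1,p_2$ are the quasi-momenta associated with a left-invariant adapted frame, then on the constraint space $\Omega_1=(p_1-B_1)/I_{11}$, $\Omega_2=(p_2-B_2)/I_{22}$, so $(\Omega_1,\Omega_2)$ serve as coordinates on $\widehat{\mathcal{D}^*}$. The reduced equations are $\dot\Omega_1=-\frac{1}{I_{11}}(I_{13}\Omega_1+I_{23}\Omega_2+B_3)\Omega_2$, $\dot\Omega_2=\frac{1}{I_{22}}(I_{13}\Omega_1+I_{23}\Omega_2+B_3)\Omega_1$, Hamiltonian with respect to this bracket and $H=\frac12(I_{11}\Omega_1^2+I_{22}\Omega_2^2)$. *)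

theory Defs
  imports "HOL-Analysis.Analysis" "HOL-Analysis.Cross3"
begin

text \<open>Suslov problem with a gyrostat, in the left trivialization of T SO(3) and T* SO(3):
  body angular velocities and body momenta are elements of real^3.\<close>

definition inertia :: "real \<Rightarrow> real \<Rightarrow> real \<Rightarrow> real \<Rightarrow> real \<Rightarrow> real^3^3" where
  "inertia I11 I22 I33 I13 I23 =
     vector [vector [I11, 0, I13], vector [0, I22, I23], vector [I13, I23, I33]]"

definition grad3 :: "(real^3 \<Rightarrow> real) \<Rightarrow> real^3 \<Rightarrow> real^3" where
  "grad3 F M = (\<chi> i. frechet_derivative F (at M) (axis i 1))"

text \<open>Canonical Poisson bracket of SO(3)-invariant (under left multiplication) functions on
  T* SO(3), written in terms of the body momentum M (minus Lie--Poisson bracket on so(3)*).\<close>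
definition can_bracket :: "(real^3 \<Rightarrow> real) \<Rightarrow> (real^3 \<Rightarrow> real) \<Rightarrow> real^3 \<Rightarrow> real" where
  "can_bracket F G M = - (M \<bullet> cross3 (grad3 F M) (grad3 G M))"

definition distD :: "(real^3) set" where
  "distD = {v. v $ 3 = 0}"

definition Dperp :: "real^3^3 \<Rightarrow> (real^3) set" where
  "Dperp II = {v. \<forall>w\<in>distD. w \<bullet> (II *v v) = 0}"

definition annih :: "(real^3) set \<Rightarrow> (real^3) set" where
  "annih S = {\<mu>. \<forall>v\<in>S. \<mu> \<bullet> v = 0}"

text \<open>D* identified with the annihilator of D-perp.\<close>
definition Dstar :: "real^3^3 \<Rightarrow> (real^3) set" where
  "Dstar II = annih (Dperp II)"

definition iD :: "real^3^3 \<Rightarrow> real^3 \<Rightarrow> real^3" where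
  "iD II \<mu> = (THE \<nu>. \<nu> \<in> Dstar II \<and> \<mu> - \<nu> \<in> annih distD)"

text \<open>Perpendicular part of the gyroscopic 1-form eta = B . Omega.\<close>
definition eta_perp :: "real^3^3 \<Rightarrow> real^3 \<Rightarrow> real^3" where
  "eta_perp II B = B - iD II B"

definition nh_bracket :: "real^3^3 \<Rightarrow> real^3 \<Rightarrow> (real^3 \<Rightarrow> real) \<Rightarrow> (real^3 \<Rightarrow> real) \<Rightarrow> real^3 \<Rightarrow> real" where
  "nh_bracket II B \<phi> \<psi> \<mu> = can_bracket (\<phi> \<circ> iD II) (\<psi> \<circ> iD II) (\<mu> + eta_perp II B)"

text \<open>Coordinates (Omega_1, Omega_2) on D*/SO(3): quasi-momenta p_i = mu(e_i), Omega_i = (p_i - B_i)/I_ii.\<close>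
definition omega_coords :: "real \<Rightarrow> real \<Rightarrow> real^3 \<Rightarrow> real^3 \<Rightarrow> real \<times> real" where
  "omega_coords I11 I22 B \<mu> = ((\<mu> $ 1 - B $ 1) / I11, (\<mu> $ 2 - B $ 2) / I22)"

definition reduced_bracket ::
  "real \<Rightarrow> real \<Rightarrow> real \<Rightarrow> real \<Rightarrow> real \<Rightarrow> real^3 \<Rightarrow>
   (real \<times> real \<Rightarrow> real) \<Rightarrow> (real \<times> real \<Rightarrow> real) \<Rightarrow> real \<times> real \<Rightarrow> real" where
  "reduced_bracket I11 I22 I33 I13 I23 B \<phi> \<psi> w =
     (let II = inertia I11 I22 I33 I13 I23;
          \<mu> = (THE \<mu>. \<mu> \<in> Dstar II \<and> omega_coords I11 I22 B \<mu> = w)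
      in nh_bracket II B (\<phi> \<circ> omega_coords I11 I22 B) (\<psi> \<circ> omega_coords I11 I22 B) \<mu>)"

definition pd1 :: "(real \<times> real \<Rightarrow> real) \<Rightarrow> real \<times> real \<Rightarrow> real" where
  "pd1 f w = frechet_derivative f (at w) (1, 0)"

definition pd2 :: "(real \<times> real \<Rightarrow> real) \<Rightarrow> real \<times> real \<Rightarrow> real" where
  "pd2 f w = frechet_derivative f (at w) (0, 1)"

end

theory Submission
  imports Defs
begin

lemma vec3_eq: "(v::real^3) = w \<longleftrightarrow> v$1 = w$1 \<and> v$2 = w$2 \<and> v$3 = w$3"
  by (simp add: vec_eq_iff forall_3)

lemma inner3: "(v::real^3) \<bullet> w = v$1*w$1 + v$2*w$2 + v$3*w$3"
  by (simp add: inner_vec_def sum_3)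

lemma IIv:
  "(inertia I11 I22 I33 I13 I23 *v v) $ 1 = I11 * v$1 + I13 * v$3"
  "(inertia I11 I22 I33 I13 I23 *v v) $ 2 = I22 * v$2 + I23 * v$3"
  "(inertia I11 I22 I33 I13 I23 *v v) $ 3 = I13 * v$1 + I23 * v$2 + I33 * v$3"
  by (simp_all add: inertia_def matrix_vector_mult_def sum_3)

lemma annih_distD: "annih distD = {\<mu>. \<mu>$1 = 0 \<and> \<mu>$2 = 0}"
proof -
  have "(\<forall>v\<in>distD. \<mu> \<bullet> v = 0) \<longleftrightarrow> \<mu>$1 = 0 \<and> \<mu>$2 = 0" for \<mu> :: "real^3"
  proof
    assume h: "\<forall>v\<in>distD. \<mu> \<bullet> v = 0"
    have "\<mu> \<bullet> axis 1 1 = 0" "\<mu> \<bullet> axis 2 1 = 0" using h by (auto simp: distD_def axis_def)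
    then show "\<mu>$1 = 0 \<and> \<mu>$2 = 0" by (simp_all add: inner3 axis_def)
  next
    assume "\<mu>$1 = 0 \<and> \<mu>$2 = 0"
    then show "\<forall>v\<in>distD. \<mu> \<bullet> v = 0" by (simp add: distD_def inner3)
  qed
  then show ?thesis by (auto simp: annih_def)
qed

lemma Dperp_char:
  "Dperp (inertia I11 I22 I33 I13 I23) = {v. I11 * v$1 + I13 * v$3 = 0 \<and> I22 * v$2 + I23 * v$3 = 0}"
proof -
  let ?II = "inertia I11 I22 I33 I13 I23"
  have "(\<forall>w\<in>distD. w \<bullet> (?II *v v) = 0) \<longleftrightarrow> I11 * v$1 + I13 * v$3 = 0 \<and> I22 * v$2 + I23 * v$3 = 0" for v
  proof
    assume h: "\<forall>w\<in>distD. w \<bullet> (?II *v v) = 0"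
    have "axis 1 1 \<bullet> (?II *v v) = 0" "axis 2 1 \<bullet> (?II *v v) = 0" using h by (auto simp: distD_def axis_def)
    then show "I11 * v$1 + I13 * v$3 = 0 \<and> I22 * v$2 + I23 * v$3 = 0" by (simp_all add: inner3 axis_def IIv)
  next
    assume "I11 * v$1 + I13 * v$3 = 0 \<and> I22 * v$2 + I23 * v$3 = 0"
    then show "\<forall>w\<in>distD. w \<bullet> (?II *v v) = 0" by (simp add: distD_def inner3 IIv)
  qed
  then show ?thesis by (auto simp: Dperp_def)
qed

lemma Dstar_char:
  assumes "I11 \<noteq> 0" "I22 \<noteq> 0"
  shows "\<mu> \<in> Dstar (inertia I11 I22 I33 I13 I23) \<longleftrightarrow> \<mu>$3 = I13 * \<mu>$1 / I11 + I23 * \<mu>$2 / I22"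
proof
  assume "\<mu> \<in> Dstar (inertia I11 I22 I33 I13 I23)"
  then have h: "\<And>v. I11 * v$1 + I13 * v$3 = 0 \<Longrightarrow> I22 * v$2 + I23 * v$3 = 0 \<Longrightarrow> \<mu> \<bullet> v = 0"
    by (auto simp: Dstar_def annih_def Dperp_char)
  define d :: "real^3" where "d = vector [- I13 / I11, - I23 / I22, 1]"
  have "\<mu> \<bullet> d = 0" by (rule h) (use assms in \<open>simp_all add: d_def\<close>)
  then show "\<mu>$3 = I13 * \<mu>$1 / I11 + I23 * \<mu>$2 / I22"
    by (simp add: d_def inner3 field_simps)
next
  assume h: "\<mu>$3 = I13 * \<mu>$1 / I11 + I23 * \<mu>$2 / I22"
  have "\<mu> \<bullet> v = 0" if "I11 * v$1 + I13 * v$3 = 0" "I22 * v$2 + I23 * v$3 = 0" for v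
  proof -
    have "v$1 = - I13 * v$3 / I11" "v$2 = - I23 * v$3 / I22" using that assms by (simp_all add: field_simps)
    then show ?thesis using h by (simp add: inner3 field_simps)
  qed
  then show "\<mu> \<in> Dstar (inertia I11 I22 I33 I13 I23)"
    by (auto simp: Dstar_def annih_def Dperp_char)
qed


lemma iD_char:
  assumes "I11 \<noteq> 0" "I22 \<noteq> 0"
  shows "iD (inertia I11 I22 I33 I13 I23) m = vector [m$1, m$2, I13 * m$1 / I11 + I23 * m$2 / I22]"
  unfolding iD_def
proof (rule the_equality)
  show "vector [m$1, m$2, I13 * m$1 / I11 + I23 * m$2 / I22] \<in> Dstar (inertia I11 I22 I33 I13 I23) \<and>
    m - vector [m$1, m$2, I13 * m$1 / I11 + I23 * m$2 / I22] \<in> annih distD"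
    using assms by (simp add: Dstar_char annih_distD)
next
  fix \<nu> assume "\<nu> \<in> Dstar (inertia I11 I22 I33 I13 I23) \<and> m - \<nu> \<in> annih distD"
  then show "\<nu> = vector [m$1, m$2, I13 * m$1 / I11 + I23 * m$2 / I22]"
    using assms by (simp add: Dstar_char annih_distD vec3_eq)
qed

lemma oc_deriv:
  "(omega_coords I11 I22 B has_derivative (\<lambda>h. (h$1/I11, h$2/I22))) (at m)"
proof -
  have "bounded_linear (\<lambda>h::real^3. (h$1/I11, h$2/I22))"
    by (intro bounded_linear_Pair bounded_linear_compose[OF bounded_linear_divide] bounded_linear_vec_nth)
  then have "((\<lambda>h::real^3. (h$1/I11, h$2/I22)) has_derivative (\<lambda>h. (h$1/I11, h$2/I22))) (at m)"
    by (rule bounded_linear_imp_has_derivative)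
  note d0 = this
  have "((\<lambda>h::real^3. (h$1/I11, h$2/I22) - (B$1/I11, B$2/I22)) has_derivative (\<lambda>h. (h$1/I11, h$2/I22))) (at m)"
    using has_derivative_diff[OF d0 has_derivative_const[of "(B$1/I11, B$2/I22)"]] by (simp add: diff_minus_eq_add)
  moreover have "(\<lambda>h::real^3. (h$1/I11, h$2/I22) - (B$1/I11, B$2/I22)) = omega_coords I11 I22 B"
    by (auto simp: omega_coords_def diff_divide_distrib)
  ultimately show ?thesis by simp
qed

lemma grad3_comp:
  assumes dg: "\<And>w. g differentiable (at w)"
  shows "grad3 (g \<circ> omega_coords I11 I22 B) M $ 1 = pd1 g (omega_coords I11 I22 B M) / I11"
    "grad3 (g \<circ> omega_coords I11 I22 B) M $ 2 = pd2 g (omega_coords I11 I22 B M) / I22"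
    "grad3 (g \<circ> omega_coords I11 I22 B) M $ 3 = 0"
proof -
  let ?w = "omega_coords I11 I22 B M"
  let ?g' = "frechet_derivative g (at ?w)"
  have gd: "(g has_derivative ?g') (at ?w)" using dg frechet_derivative_works by blast
  have lin: "linear ?g'" using gd has_derivative_linear by blast
  have "((g \<circ> omega_coords I11 I22 B) has_derivative (?g' \<circ> (\<lambda>h. (h$1/I11, h$2/I22)))) (at M)"
    by (rule diff_chain_at[OF oc_deriv gd])
  then have fd: "frechet_derivative (g \<circ> omega_coords I11 I22 B) (at M) = ?g' \<circ> (\<lambda>h. (h$1/I11, h$2/I22))"
    by (simp add: frechet_derivative_at[symmetric])
  have a1: "grad3 (g \<circ> omega_coords I11 I22 B) M $ 1 = ?g' ((1/I11) *\<^sub>R (1::real, 0::real))"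
    by (simp add: grad3_def fd axis_def)
  have a2: "grad3 (g \<circ> omega_coords I11 I22 B) M $ 2 = ?g' ((1/I22) *\<^sub>R (0::real, 1::real))"
    by (simp add: grad3_def fd axis_def)
  have a3: "grad3 (g \<circ> omega_coords I11 I22 B) M $ 3 = ?g' 0"
    by (simp add: grad3_def fd axis_def zero_prod_def)
  show "grad3 (g \<circ> omega_coords I11 I22 B) M $ 1 = pd1 g ?w / I11"
    unfolding a1 pd1_def linear_scale[OF lin] by simp
  show "grad3 (g \<circ> omega_coords I11 I22 B) M $ 2 = pd2 g ?w / I22"
    unfolding a2 pd2_def linear_scale[OF lin] by simp
  show "grad3 (g \<circ> omega_coords I11 I22 B) M $ 3 = 0"
    unfolding a3 linear_0[OF lin] by simp
qed


theorem theorem6p1: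
  fixes I11 I22 I33 I13 I23 :: real and B :: "real^3"
    and \<phi> \<psi> :: "real \<times> real \<Rightarrow> real"
  assumes posdef: "\<And>v. v \<noteq> 0 \<Longrightarrow> v \<bullet> (inertia I11 I22 I33 I13 I23 *v v) > 0"
    and diff_phi: "\<And>w. \<phi> differentiable (at w)"
    and diff_psi: "\<And>w. \<psi> differentiable (at w)"
  shows "reduced_bracket I11 I22 I33 I13 I23 B \<phi> \<psi> (x, y) =
         - (I13 * x + I23 * y + B $ 3) / (I11 * I22)
           * (pd1 \<phi> (x, y) * pd2 \<psi> (x, y) - pd2 \<phi> (x, y) * pd1 \<psi> (x, y))"
proof -
  let ?II = "inertia I11 I22 I33 I13 I23"
  let ?oc = "omega_coords I11 I22 B"
  have "(axis 1 1 :: real^3) \<bullet> (?II *v axis 1 1) > 0"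
    by (rule posdef) (simp add: axis_eq_0_iff)
  then have h1: "I11 \<noteq> 0" by (simp add: inner3 IIv axis_def)
  have "(axis 2 1 :: real^3) \<bullet> (?II *v axis 2 1) > 0"
    by (rule posdef) (simp add: axis_eq_0_iff)
  then have h2: "I22 \<noteq> 0" by (simp add: inner3 IIv axis_def)
  define \<mu>0 :: "real^3" where "\<mu>0 = vector [I11 * x + B$1, I22 * y + B$2,
     I13 * (I11 * x + B$1) / I11 + I23 * (I22 * y + B$2) / I22]"
  have the_mu: "(THE \<mu>. \<mu> \<in> Dstar ?II \<and> ?oc \<mu> = (x, y)) = \<mu>0"
  proof (rule the_equality)
    show "\<mu>0 \<in> Dstar ?II \<and> ?oc \<mu>0 = (x, y)"
      using h1 h2 by (simp add: \<mu>0_def Dstar_char omega_coords_def)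
  next
    fix \<mu> assume "\<mu> \<in> Dstar ?II \<and> ?oc \<mu> = (x, y)"
    then show "\<mu> = \<mu>0"
      using h1 h2 by (simp add: \<mu>0_def Dstar_char omega_coords_def vec3_eq field_simps)
  qed
  define M where "M = \<mu>0 + eta_perp ?II B"
  have M1: "M$1 = I11 * x + B$1" and M2: "M$2 = I22 * y + B$2"
    and M3: "M$3 = I13 * x + I23 * y + B$3"
    using h1 h2 by (simp_all add: M_def \<mu>0_def eta_perp_def iD_char field_simps)
  have ocM: "?oc M = (x, y)" using h1 h2 M1 M2 by (simp add: omega_coords_def)
  have comp: "(g \<circ> ?oc) \<circ> iD ?II = g \<circ> ?oc" for g :: "real \<times> real \<Rightarrow> real"
    using h1 h2 by (simp add: fun_eq_iff iD_char omega_coords_def)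
  have "reduced_bracket I11 I22 I33 I13 I23 B \<phi> \<psi> (x, y) =
      can_bracket (\<phi> \<circ> ?oc) (\<psi> \<circ> ?oc) M"
    by (simp add: reduced_bracket_def the_mu nh_bracket_def M_def comp Let_def)
  also have "\<dots> = - (M$3 * (grad3 (\<phi> \<circ> ?oc) M $ 1 * grad3 (\<psi> \<circ> ?oc) M $ 2
      - grad3 (\<phi> \<circ> ?oc) M $ 2 * grad3 (\<psi> \<circ> ?oc) M $ 1))"
    by (simp add: can_bracket_def inner3 cross3_def grad3_comp(3)[OF diff_phi] grad3_comp(3)[OF diff_psi])
  also have "\<dots> = - (I13 * x + I23 * y + B $ 3) / (I11 * I22)
           * (pd1 \<phi> (x, y) * pd2 \<psi> (x, y) - pd2 \<phi> (x, y) * pd1 \<psi> (x, y))"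
    using h1 h2 by (simp add: grad3_comp[OF diff_phi] grad3_comp[OF diff_psi] ocM M3 field_simps)
  finally show ?thesis .
qed

end
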